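(* Let $l\ge1$ and $\mu\ge0$ be integers. Then the Schur–Szegő composition of entire functions $$U:=\underbrace{e^xx*\cdots*e^xx}_{l\text{ factors}}*e^x(x-1)*e^x(x-2)*\cdots*e^x(x-\mu)$$ is of the form $e^xY$, where $Y$ is a polynomial of degree $l+\mu$ having a root of multiplicity $\mu+1$ at $0$ and $l-1$ simple negative roots.
   Context: Schur–Szegő composition of entire functions: for $f=\sum_{j\ge0}\gamma_jx^j/j!$ and $g=\sum_{j\ge0}\delta_jx^j/j!$ (everywhere convergent series) one sets $f*g=\sum_{j\ge0}\gamma_j\delta_jx^j/j!$; it is commutative and associative. *)

theory Defs
  imports "HOL-Analysis.Analysis" "HOL-Computational_Algebra.Polynomial"
begin

text \<open>Taylor coefficients at 0 of a function on the complex plane: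
  for an entire function f = sum_j gamma_j z^j / j!, gamma_j is the j-th derivative at 0.\<close>
definition taylor_coeff :: "(complex \<Rightarrow> complex) \<Rightarrow> nat \<Rightarrow> complex" where
  "taylor_coeff f j = (deriv ^^ j) f 0"

definition schur_szego :: "(complex \<Rightarrow> complex) \<Rightarrow> (complex \<Rightarrow> complex) \<Rightarrow> complex \<Rightarrow> complex" where
  "schur_szego f g = (\<lambda>z. \<Sum>j. taylor_coeff f j * taylor_coeff g j * z ^ j / fact j)"

end

theory Submission
  imports Defs "HOL-Complex_Analysis.Complex_Analysis"
begin


definition Sop :: "'a::idom poly \<Rightarrow> 'a poly" where
  "Sop p = p + pderiv p"

definition Tk :: "nat \<Rightarrow> 'a::idom poly \<Rightarrow> 'a poly" where
  "Tk k p = [:0,1:] * Sop p - smult (of_nat k) p"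

definition E :: "complex poly \<Rightarrow> complex \<Rightarrow> complex" where
  "E p = (\<lambda>z. exp z * poly p z)"

lemma Sop_add: "Sop (p + q) = Sop p + Sop q"
  by (simp add: Sop_def pderiv_add)
lemma Sop_diff: "Sop (p - q) = Sop p - Sop (q::'a::idom poly)"
  by (simp add: Sop_def pderiv_diff)
lemma Sop_smult: "Sop (smult c p) = smult c (Sop p)"
  by (simp add: Sop_def pderiv_smult smult_add_right)

lemma Sopn_add: "(Sop ^^ j) (p + q) = (Sop ^^ j) p + (Sop ^^ j) q"
  by (induction j) (simp_all add: Sop_add)
lemma Sopn_diff: "(Sop ^^ j) (p - q) = (Sop ^^ j) p - (Sop ^^ j) (q::'a::idom poly)"
  by (induction j) (simp_all add: Sop_diff)
lemma Sopn_smult: "(Sop ^^ j) (smult c p) = smult c ((Sop ^^ j) p)"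
  by (induction j) (simp_all add: Sop_smult)

lemma Sop_x: "Sop (pCons 0 q) = pCons 0 (Sop q) + (q::'a::idom poly)"
  by (simp add: Sop_def pderiv_pCons algebra_simps)

lemma Sopn_x: "(Sop ^^ j) (pCons 0 q) = pCons 0 ((Sop ^^ j) q) + smult (of_nat j) ((Sop ^^ (j - 1)) (q::'a::idom poly))"
proof (induction j)
  case 0 then show ?case by simp
next
  case (Suc j)
  show ?case
  proof (cases j)
    case 0 then show ?thesis by (simp add: Sop_x)
  next
    case (Suc i)
    have "(Sop ^^ Suc j) (pCons 0 q) = Sop (pCons 0 ((Sop ^^ j) q) + smult (of_nat j) ((Sop ^^ (j - 1)) q))"
      using Suc.IH by simp
    also have "\<dots> = pCons 0 ((Sop ^^ Suc j) q) + (Sop ^^ j) q + smult (of_nat j) ((Sop ^^ j) q)"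
      using Suc by (simp add: Sop_add Sop_smult Sop_x)
    also have "\<dots> = pCons 0 ((Sop ^^ Suc j) q) + smult (of_nat (Suc j)) ((Sop ^^ (Suc j - 1)) q)"
      by (simp add: algebra_simps smult_add_left)
    finally show ?thesis .
  qed
qed

lemma Sopn_1: "(Sop ^^ j) (1::'a::idom poly) = 1"
  by (induction j) (simp_all add: Sop_def)

lemma Sopn_Tk0: "poly ((Sop ^^ j) (pCons 0 (Sop p))) 0 = of_nat j * poly ((Sop ^^ j) (p::'a::idom poly)) 0"
proof (cases j)
  case 0 then show ?thesis by simp
next
  case (Suc i)
  then show ?thesis by (simp only: Sopn_x) (simp add: funpow_Suc_right del: funpow.simps)
qed

lemma Sopn_Tk: "poly ((Sop ^^ j) (Tk k p)) 0 = (of_nat j - of_nat k) * poly ((Sop ^^ j) (p::'a::idom poly)) 0"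
  by (simp add: Tk_def Sopn_diff Sopn_smult Sopn_Tk0 algebra_simps)

lemma E_deriv: "(E p has_field_derivative E (Sop p) z) (at z)"
proof -
  have "((\<lambda>z. exp z * poly p z) has_field_derivative exp z * poly p z + exp z * poly (pderiv p) z) (at z)"
    by (auto intro!: derivative_eq_intros)
  then show ?thesis by (simp add: E_def Sop_def algebra_simps)
qed

lemma deriv_E: "deriv (E p) = E (Sop p)"
  using E_deriv DERIV_imp_deriv by blast

lemma derivn_E: "(deriv ^^ j) (E p) = E ((Sop ^^ j) p)"
  by (induction j) (simp_all add: deriv_E)

lemma taylor_E: "taylor_coeff (E p) j = poly ((Sop ^^ j) p) 0"
  unfolding taylor_coeff_def derivn_E by (simp add: E_def)

lemma E_holo: "E p holomorphic_on S"
  unfolding E_def by (intro holomorphic_intros)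

lemma E_series: "(\<lambda>j. taylor_coeff (E p) j * w ^ j / fact j) sums E p w"
proof -
  have "(\<lambda>n. (deriv ^^ n) (E p) 0 / (fact n) * (w-0)^n) sums E p w"
    by (rule holomorphic_power_series[where r = "norm w + 1"]) (auto simp: E_holo)
  then show ?thesis by (simp add: taylor_coeff_def field_simps)
qed

lemma Tk1: "Tk k 1 = [:- of_nat k, 1:]"
  by (simp add: Tk_def Sop_def)

lemma step: "schur_szego (E p) (E (Tk k 1)) = E (Tk k p)"
proof
  fix z
  have "(\<lambda>j. taylor_coeff (E (Tk k p)) j * z ^ j / fact j) sums E (Tk k p) z" by (rule E_series)
  moreover have "(\<lambda>j. taylor_coeff (E p) j * taylor_coeff (E (Tk k 1)) j * z ^ j / fact j)
       = (\<lambda>j. taylor_coeff (E (Tk k p)) j * z ^ j / fact j)"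
    by (simp add: taylor_E Sopn_Tk Sopn_1 mult.commute)
  ultimately show "schur_szego (E p) (E (Tk k 1)) z = E (Tk k p) z"
    unfolding schur_szego_def by (simp add: sums_iff)
qed

lemma fold_step: "foldl schur_szego (E p) (map (\<lambda>k. E (Tk k 1)) ks) = E (foldl (\<lambda>p k. Tk k p) p ks)"
  by (induction ks arbitrary: p) (simp_all add: step)


subsection \<open>Algebra of the operators\<close>

lemma Tk0: "Tk 0 p = pCons 0 (Sop p)"
  by (simp add: Tk_def)
lemma Tk_eq: "Tk k p = Tk 0 p - smult (of_nat k) p"
  by (simp add: Tk_def)
lemma Tk0_diff: "Tk 0 (p - q) = Tk 0 p - Tk 0 (q::'a::idom poly)"
  by (simp add: Tk0 Sop_diff)
lemma Tk0_smult: "Tk 0 (smult c p) = smult c (Tk 0 p)"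
  by (simp add: Tk0 Sop_smult)
lemma Tk0n_diff: "(Tk 0 ^^ n) (p - q) = (Tk 0 ^^ n) p - (Tk 0 ^^ n) (q::'a::idom poly)"
  by (induction n) (simp_all add: Tk0_diff)
lemma Tk0n_smult: "(Tk 0 ^^ n) (smult c p) = smult c ((Tk 0 ^^ n) p)"
  by (induction n) (simp_all add: Tk0_smult)

lemma Tk_comm: "Tk k ((Tk 0 ^^ n) q) = (Tk 0 ^^ n) (Tk k (q::'a::idom poly))"
proof -
  have "Tk k ((Tk 0 ^^ n) q) = Tk 0 ((Tk 0 ^^ n) q) - smult (of_nat k) ((Tk 0 ^^ n) q)"
    by (rule Tk_eq)
  also have "\<dots> = (Tk 0 ^^ n) (Tk 0 q) - smult (of_nat k) ((Tk 0 ^^ n) q)"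
    by (simp add: funpow_swap1)
  also have "\<dots> = (Tk 0 ^^ n) (Tk k q)"
    by (subst (2) Tk_eq) (simp add: Tk0n_diff Tk0n_smult)
  finally show ?thesis .
qed

lemma fold_comm: "foldl (\<lambda>p k. Tk k p) ((Tk 0 ^^ n) q) ks = (Tk 0 ^^ n) (foldl (\<lambda>p k. Tk k p) (q::'a::idom poly) ks)"
  by (induction ks arbitrary: q) (simp_all add: Tk_comm)

lemma fold_rep: "foldl (\<lambda>p k. Tk k p) q (replicate n 0) = (Tk 0 ^^ n) (q::'a::idom poly)"
  by (induction n arbitrary: q) (simp_all add: funpow_Suc_right del: funpow.simps)

lemma Tk_pow: "Tk k ([:0,1:]^k) = ([:0,1:]^(Suc k) :: 'a::idom poly)"
proof (cases k)
  case 0 then show ?thesis by (simp add: Tk_def Sop_def)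
next
  case (Suc m)
  have d: "pderiv ([:0,1:]^Suc m :: 'a poly) = smult (of_nat (Suc m)) ([:0,1:]^m)"
    by (simp only: pderiv_power_Suc) (simp add: pderiv_pCons)
  have "Tk k ([:0,1:]^k) = [:0,1:] * ([:0,1:]^Suc m + smult (of_nat (Suc m)) ([:0,1:]^m)) - smult (of_nat (Suc m)) ([:0,1:]^Suc m :: 'a poly)"
    unfolding Tk_def Sop_def Suc d ..
  also have "\<dots> = [:0,1:]^(Suc k)"
    unfolding Suc by (simp only: power_Suc mult_smult_right distrib_left) simp
  finally show ?thesis .
qed

lemma fold_pow: "foldl (\<lambda>p k. Tk k p) [:0,1:] [1..<Suc m] = ([:0,1:]^Suc m :: 'a::idom poly)"
proof (induction m)
  case 0 then show ?case by simp
next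
  case (Suc m)
  have "[1..<Suc (Suc m)] = [1..<Suc m] @ [Suc m]" by simp
  then show ?case using Suc by (simp only: foldl_append) (simp add: Tk_pow del: power_Suc upt_Suc)
qed

lemma map_Tk0: "map_poly complex_of_real (Tk 0 p) = Tk 0 (map_poly of_real p)"
  by (rule poly_eqI) (simp add: Tk0 Sop_def coeff_map_poly coeff_pCons coeff_pderiv split: nat.split)

lemma map_Tk0n: "map_poly complex_of_real ((Tk 0 ^^ n) p) = (Tk 0 ^^ n) (map_poly of_real p)"
  by (induction n) (simp_all add: map_Tk0)

lemma map_xpow: "map_poly complex_of_real ([:0,1:]^n) = [:0,1:]^n"
  by (induction n) (simp_all add: map_poly_pCons)





subsection \<open>Real analysis\<close>

lemma rolle':
  fixes g g' :: "real \<Rightarrow> real"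
  assumes d: "\<And>x. (g has_real_derivative g' x) (at x)" and ab: "a < b" "g a = g b"
  shows "\<exists>z. a < z \<and> z < b \<and> g' z = 0"
proof -
  have "continuous_on {a..b} g" using d by (meson DERIV_isCont continuous_at_imp_continuous_on)
  moreover have "\<And>x. g differentiable (at x)" using d real_differentiable_def by blast
  ultimately obtain z where "a < z" "z < b" "DERIV g z :> 0" using Rolle[of a b g] ab by blast
  then show ?thesis using d DERIV_unique by blast
qed

lemma ext_rolle:
  fixes g g' :: "real \<Rightarrow> real"
  assumes d: "\<And>x. (g has_real_derivative g' x) (at x)" and gs: "g s = 0"
    and lim: "(g \<longlongrightarrow> 0) at_bot"
  shows "\<exists>t<s. g' t = 0"
proof (cases "\<exists>a<s. g a = 0")
  case True then obtain a where "a < s" "g a = 0" by blast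
  then obtain z where "a < z" "z < s" "g' z = 0" using rolle'[OF d, of a s] gs by auto
  then show ?thesis by blast
next
  case False
  define a where "a = s - 1"
  have cont: "continuous_on A g" for A using d by (meson DERIV_isCont continuous_at_imp_continuous_on)
  have ga: "g a \<noteq> 0" using False a_def by auto
  have "abs (g a) > 0" using ga by simp
  then have "\<forall>\<^sub>F x in at_bot. dist (g x) 0 < abs (g a)" using lim unfolding tendsto_iff by blast
  then obtain N where N: "\<And>x. x \<le> N \<Longrightarrow> abs (g x) < abs (g a)"
    by (auto simp: eventually_at_bot_linorder)
  define b where "b = min N (a - 1)"
  have ba: "b < a" and gb: "abs (g b) < abs (g a)" using N b_def by auto
  have gb0: "g b \<noteq> 0" using False ba a_def by auto
  have "\<exists>c. a \<le> c \<and> c \<le> s \<and> g c = g b"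
  proof (cases "g a > 0")
    case True
    have "g b > 0"
    proof (rule ccontr)
      assume "\<not> g b > 0" then have "g b \<le> 0" by simp
      then obtain c where "b \<le> c" "c \<le> a" "g c = 0" using IVT'[of g b 0 a] True ba cont by auto
      then show False using False a_def by auto
    qed
    then show ?thesis using IVT2'[of g s "g b" a] gs gb True cont a_def by auto
  next
    case F2: False
    then have ga': "g a < 0" using ga by simp
    have "g b < 0"
    proof (rule ccontr)
      assume "\<not> g b < 0" then have "g b \<ge> 0" by simp
      then obtain c where "b \<le> c" "c \<le> a" "g c = 0" using IVT2'[of g a 0 b] ga' ba cont by auto
      then show False using False a_def by auto
    qed
    then show ?thesis using IVT'[of g a "g b" s] gs gb ga' cont a_def by auto
  qed
  then obtain c where c: "a \<le> c" "c \<le> s" "g c = g b" by blast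
  have "b < c" using c ba by simp
  then obtain t where "b < t" "t < c" "g' t = 0" using rolle'[OF d, of b c] c by auto
  then show ?thesis using c by (intro exI[of _ t]) auto
qed

lemma lim_poly_exp: "((\<lambda>x::real. exp x * poly p x) \<longlongrightarrow> 0) at_bot"
proof -
  have eq: "(\<lambda>x. exp (-x) * poly p (-x)) = (\<lambda>x. \<Sum>i\<le>degree p. (coeff p i * (-1)^i) * (x^i / exp x))"
  proof
    fix x :: real
    have "exp (-x) * poly p (-x) = (\<Sum>i\<le>degree p. exp(-x) * (coeff p i * (-x)^i))"
      by (simp add: poly_altdef sum_distrib_left)
    also have "\<dots> = (\<Sum>i\<le>degree p. (coeff p i * (-1)^i) * (x^i / exp x))"
    proof (rule sum.cong)
      fix i
      have "(-x)^i = (-1)^i * x^i" by (rule power_minus)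
      then show "exp (-x) * (coeff p i * (-x)^i) = (coeff p i * (-1)^i) * (x^i / exp x)"
        by (simp add: exp_minus divide_inverse mult_ac del: power_minus)
    qed simp
    finally show "exp (-x) * poly p (-x) = (\<Sum>i\<le>degree p. (coeff p i * (-1)^i) * (x^i / exp x))" .
  qed
  have "((\<lambda>x. \<Sum>i\<le>degree p. (coeff p i * (-1)^i) * (x^i / exp x)) \<longlongrightarrow> (\<Sum>i\<le>degree p. (coeff p i * (-1)^i) * 0)) at_top"
    by (intro tendsto_sum tendsto_mult tendsto_const tendsto_power_div_exp_0)
  then have "((\<lambda>x. exp (-x) * poly p (-x)) \<longlongrightarrow> 0) at_top" unfolding eq by simp
  then show ?thesis by (simp add: filterlim_at_bot_mirror)
qed

lemma card_step:
  fixes P :: "real poly"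
  assumes P0: "poly P 0 = 0" and nz: "Sop P \<noteq> 0" and Pnz: "P \<noteq> 0"
    and card: "n \<le> card {x. x < 0 \<and> poly P x = 0}"
  shows "Suc n \<le> card {x. x < 0 \<and> poly (Tk 0 P) x = 0}"
proof -
  define g where "g x = exp x * poly P x" for x
  define g' where "g' x = exp x * poly (Sop P) x" for x
  have d: "(g has_real_derivative g' x) (at x)" for x
  proof -
    have "((\<lambda>x. exp x * poly P x) has_real_derivative exp x * poly P x + exp x * poly (pderiv P) x) (at x)"
      by (auto intro!: derivative_eq_intros)
    then show ?thesis by (simp add: g_def[abs_def] g'_def Sop_def algebra_simps)
  qed
  have lim: "(g \<longlongrightarrow> 0) at_bot" using lim_poly_exp by (simp add: g_def[abs_def])
  define A where "A = {x. x < 0 \<and> poly P x = 0}"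
  define Z where "Z = insert 0 A"
  have finA: "finite A" using poly_roots_finite[OF Pnz] unfolding A_def by (rule rev_finite_subset) auto
  then have finZ: "finite Z" by (simp add: Z_def)
  have gZ: "\<And>s. s \<in> Z \<Longrightarrow> g s = 0" using P0 by (auto simp: Z_def A_def g_def)
  have ex: "\<forall>s\<in>Z. \<exists>t. t < s \<and> g' t = 0 \<and> (\<forall>z\<in>Z. z < s \<longrightarrow> z < t)"
  proof
    fix s assume s: "s \<in> Z"
    show "\<exists>t. t < s \<and> g' t = 0 \<and> (\<forall>z\<in>Z. z < s \<longrightarrow> z < t)"
    proof (cases "{z\<in>Z. z < s} = {}")
      case True
      then obtain t where "t < s" "g' t = 0" using ext_rolle[OF d gZ[OF s] lim] by blast
      with True show ?thesis by blast
    next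
      case False
      define a where "a = Max {z\<in>Z. z < s}"
      have fin: "finite {z\<in>Z. z < s}" using finZ by simp
      have aZ: "a \<in> {z\<in>Z. z < s}" using Max_in[OF fin False] a_def by simp
      have amax: "\<And>z. z \<in> Z \<Longrightarrow> z < s \<Longrightarrow> z \<le> a" using Max_ge[OF fin] a_def by simp
      have "a < s" "g a = g s" using aZ gZ s by auto
      then obtain t where "a < t" "t < s" "g' t = 0" using rolle'[OF d, of a s] by auto
      then show ?thesis using amax by fastforce
    qed
  qed
  then obtain t where t: "\<And>s. s \<in> Z \<Longrightarrow> t s < s \<and> g' (t s) = 0 \<and> (\<forall>z\<in>Z. z < s \<longrightarrow> z < t s)"
    by metis
  have inj: "inj_on t Z"
  proof (rule inj_onI)
    fix x y assume xy: "x \<in> Z" "y \<in> Z" "t x = t y"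
    show "x = y"
    proof (rule linorder_cases[of x y])
      assume "x < y"
      then have "t x < x" "x < t y" using t[OF xy(1)] t[OF xy(2)] xy(1) by auto
      then show ?thesis using xy(3) by simp
    next
      assume "y < x"
      then have "t y < y" "y < t x" using t[OF xy(1)] t[OF xy(2)] xy(2) by auto
      then show ?thesis using xy(3) by simp
    qed
  qed
  have Zle: "\<And>s. s \<in> Z \<Longrightarrow> s \<le> 0" by (auto simp: Z_def A_def)
  have polyT: "poly (Tk 0 P) x = x * poly (Sop P) x" for x by (simp add: Tk0)
  have sub: "t ` Z \<subseteq> {x. x < 0 \<and> poly (Tk 0 P) x = 0}"
  proof
    fix y assume "y \<in> t ` Z"
    then obtain s where s: "s \<in> Z" "y = t s" by blast
    then have "y < 0" using t[OF s(1)] Zle[OF s(1)] by auto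
    moreover have "poly (Sop P) y = 0" using t[OF s(1)] s by (simp add: g'_def)
    ultimately show "y \<in> {x. x < 0 \<and> poly (Tk 0 P) x = 0}" by (simp add: polyT)
  qed
  have "Tk 0 P \<noteq> 0" using nz by (simp add: Tk0)
  then have fin2: "finite {x. x < 0 \<and> poly (Tk 0 P) x = 0}"
    by (rule rev_finite_subset[OF poly_roots_finite]) auto
  have "card Z \<le> card {x. x < 0 \<and> poly (Tk 0 P) x = 0}"
    by (rule card_inj_on_le[OF inj sub fin2])
  moreover have "card Z = Suc (card A)" using finA by (simp add: Z_def A_def)
  ultimately show ?thesis using card by (simp add: A_def)
qed



lemma inv_step:
  fixes P W :: "real poly" and d k n :: nat
  assumes deg: "degree P = d" and lc: "coeff P d = 1" and PW: "P = [:0,1:]^Suc k * W"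
    and W0: "poly W 0 \<noteq> 0" and card: "n \<le> card {x. x < 0 \<and> poly P x = 0}"
  shows "degree (Tk 0 P) = Suc d \<and> coeff (Tk 0 P) (Suc d) = 1 \<and>
         (\<exists>W'. Tk 0 P = [:0,1:]^Suc k * W' \<and> poly W' 0 \<noteq> 0) \<and>
         Suc n \<le> card {x. x < 0 \<and> poly (Tk 0 P) x = 0}"
proof -
  have Pnz: "P \<noteq> 0" using lc by auto
  have "coeff P (Suc d) = 0" using deg by (simp add: coeff_eq_0)
  then have cS: "coeff (Sop P) d = 1" using lc by (simp add: Sop_def coeff_pderiv)
  have "degree (Sop P) \<le> d" unfolding Sop_def
    by (rule degree_add_le) (simp_all add: deg degree_pderiv)
  moreover have "d \<le> degree (Sop P)" using cS by (intro le_degree) simp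
  ultimately have dS: "degree (Sop P) = d" by simp
  have Snz: "Sop P \<noteq> 0" using cS by auto
  have 1: "degree (Tk 0 P) = Suc d" using Snz dS by (simp add: Tk0)
  have 2: "coeff (Tk 0 P) (Suc d) = 1" using cS by (simp add: Tk0)
  define X :: "real poly" where "X = [:0,1:]"
  have dX: "pderiv (X^Suc k) = [:of_nat (Suc k):] * X^k"
    unfolding X_def by (simp only: pderiv_power_Suc) (simp add: pderiv_pCons)
  have eq: "Tk 0 P = X^Suc k * (X * (W + pderiv W) + [:of_nat (Suc k):] * W)"
  proof -
    have "Tk 0 P = X * (X^Suc k * W + (X^Suc k * pderiv W + W * pderiv (X^Suc k)))"
      unfolding Tk_def Sop_def PW X_def by (simp only: pderiv_mult) simp
    also have "\<dots> = X^Suc k * (X * (W + pderiv W) + [:of_nat (Suc k):] * W)"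
      unfolding dX by (simp only: power_Suc) (simp add: algebra_simps)
    finally show ?thesis .
  qed
  have 3: "\<exists>W'. Tk 0 P = [:0,1:]^Suc k * W' \<and> poly W' 0 \<noteq> 0"
    using eq W0 by (intro exI[of _ "X * (W + pderiv W) + [:of_nat (Suc k):] * W"]) (simp add: X_def)
  have P0: "poly P 0 = 0" using PW by simp
  have 4: "Suc n \<le> card {x. x < 0 \<and> poly (Tk 0 P) x = 0}"
    by (rule card_step[OF P0 Snz Pnz card])
  show ?thesis using 1 2 3 4 by blast
qed

lemma inv:
  "degree ((Tk 0 ^^ n) ([:0,1:]^Suc k) :: real poly) = Suc k + n \<and>
   coeff ((Tk 0 ^^ n) ([:0,1:]^Suc k) :: real poly) (Suc k + n) = 1 \<and>
   (\<exists>W::real poly. (Tk 0 ^^ n) ([:0,1:]^Suc k) = [:0,1:]^Suc k * W \<and> poly W 0 \<noteq> 0) \<and>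
   n \<le> card {x. x < 0 \<and> poly ((Tk 0 ^^ n) ([:0,1:]^Suc k) :: real poly) x = 0}"
proof (induction n)
  case 0
  have "degree ([:0,1:]^Suc k :: real poly) = Suc k"
    using degree_linear_power[of "0::real" "Suc k"] by simp
  moreover have "coeff ([:0,1:]^Suc k :: real poly) (Suc k) = 1"
    using lead_coeff_power[of "[:0,1::real:]" "Suc k"] degree_linear_power[of "0::real" "Suc k"]
    by simp
  ultimately show ?case by (intro conjI exI[of _ 1]) simp_all
next
  case (Suc n)
  have "\<exists>W. (Tk 0 ^^ n) ([:0,1:]^Suc k) = [:0,1:]^Suc k * (W :: real poly) \<and> poly W 0 \<noteq> 0"
    using Suc.IH by blast
  then obtain W where W: "(Tk 0 ^^ n) ([:0,1:]^Suc k) = [:0,1:]^Suc k * (W :: real poly)" "poly W 0 \<noteq> 0"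
    by auto
  let ?P = "(Tk 0 ^^ n) ([:0,1:]^Suc k) :: real poly"
  have h: "degree ?P = Suc k + n" "coeff ?P (Suc k + n) = 1" "n \<le> card {x. x < 0 \<and> poly ?P x = 0}"
    using Suc.IH by blast+
  have "degree (Tk 0 ?P) = Suc (Suc k + n) \<and> coeff (Tk 0 ?P) (Suc (Suc k + n)) = 1 \<and>
         (\<exists>W'. Tk 0 ?P = [:0,1:]^Suc k * W' \<and> poly W' 0 \<noteq> 0) \<and>
         Suc n \<le> card {x. x < 0 \<and> poly (Tk 0 ?P) x = 0}"
    by (rule inv_step[OF h(1,2) W h(3)])
  then show ?case by (simp only: funpow.simps o_apply add_Suc_right)
qed



theorem proposition5p1:
  fixes l \<mu> :: nat
  assumes "l \<ge> 1"
  defines "U \<equiv> foldl schur_szego (\<lambda>z. exp z * z)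
                 (replicate (l - 1) (\<lambda>z. exp z * z)
                  @ map (\<lambda>k z. exp z * (z - of_nat k)) [1..<\<mu> + 1])"
  shows "\<exists>Y :: real poly.
           (\<forall>z. U z = exp z * poly (map_poly complex_of_real Y) z)
         \<and> degree Y = l + \<mu>
         \<and> order 0 Y = \<mu> + 1
         \<and> card {x. x < 0 \<and> poly Y x = 0} = l - 1
         \<and> (\<forall>x. x < 0 \<and> poly Y x = 0 \<longrightarrow> order x Y = 1)"
proof -
  define Y :: "real poly" where "Y = (Tk 0 ^^ (l-1)) ([:0,1:]^Suc \<mu>)"
  have e0: "(\<lambda>z. exp z * z) = E (Tk 0 1)" by (simp add: E_def Tk1 fun_eq_iff)
  have ek: "(\<lambda>k z. exp z * (z - of_nat k)) = (\<lambda>k. E (Tk k 1))" by (simp add: E_def Tk1 fun_eq_iff)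
  have lst: "replicate (l - 1) (\<lambda>z. exp z * z) @ map (\<lambda>k z. exp z * (z - of_nat k)) [1..<\<mu> + 1]
      = map (\<lambda>k. E (Tk k 1)) (replicate (l-1) 0 @ [1..<\<mu>+1])"
    by (simp only: e0 ek map_append map_replicate)
  have "U = foldl schur_szego (E (Tk 0 1)) (map (\<lambda>k. E (Tk k 1)) (replicate (l-1) 0 @ [1..<\<mu>+1]))"
    unfolding U_def lst by (simp only: e0)
  also have "\<dots> = E (foldl (\<lambda>p k. Tk k p) (Tk 0 1) (replicate (l-1) 0 @ [1..<\<mu>+1]))"
    by (rule fold_step)
  also have "foldl (\<lambda>p k. Tk k p) (Tk 0 1) (replicate (l-1) 0 @ [1..<\<mu>+1])
      = ((Tk 0 ^^ (l-1)) ([:0,1:]^Suc \<mu>) :: complex poly)"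
  proof -
    have t1: "Tk 0 1 = ([:0,1:] :: complex poly)" by (simp add: Tk1)
    have "foldl (\<lambda>p k. Tk k p) (Tk 0 1 :: complex poly) (replicate (l-1) 0 @ [1..<\<mu>+1])
        = foldl (\<lambda>p k. Tk k p) ((Tk 0 ^^ (l-1)) [:0,1:]) [1..<Suc \<mu>]"
      by (simp only: foldl_append fold_rep t1 Suc_eq_plus1)
    also have "\<dots> = (Tk 0 ^^ (l-1)) (foldl (\<lambda>p k. Tk k p) [:0,1:] [1..<Suc \<mu>])"
      by (rule fold_comm)
    also have "\<dots> = (Tk 0 ^^ (l-1)) ([:0,1:]^Suc \<mu>)"
      by (simp only: fold_pow)
    finally show ?thesis .
  qed
  also have "((Tk 0 ^^ (l-1)) ([:0,1:]^Suc \<mu>) :: complex poly) = map_poly complex_of_real Y"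
    unfolding Y_def map_Tk0n map_xpow ..
  finally have UY: "\<forall>z. U z = exp z * poly (map_poly complex_of_real Y) z" by (simp add: E_def)
  have lm: "l - 1 + Suc \<mu> = l + \<mu>" using assms(1) by simp
  have I: "degree Y = Suc \<mu> + (l-1)" "coeff Y (Suc \<mu> + (l-1)) = 1"
       "\<exists>W::real poly. Y = [:0,1:]^Suc \<mu> * W \<and> poly W 0 \<noteq> 0"
       "l - 1 \<le> card {x. x < 0 \<and> poly Y x = 0}"
    using inv[of "l-1" \<mu>] unfolding Y_def by blast+
  have degY: "degree Y = l + \<mu>" using I(1) assms(1) by simp
  have Ynz: "Y \<noteq> 0" using I(2) by auto
  obtain W :: "real poly" where W: "Y = [:0,1:]^Suc \<mu> * W" "poly W 0 \<noteq> 0" using I(3) by blast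
  have ordW: "order 0 W = 0" using W(2) order_root by blast
  have ordY: "order 0 Y = \<mu> + 1"
    using order_mult[of "[:0,1:]^Suc \<mu>" W 0] Ynz W ordW order_power_n_n[of "0::real" "Suc \<mu>"] by simp
  define N where "N = {x. x < 0 \<and> poly Y x = 0}"
  have finR: "finite {x. poly Y x = 0}" using poly_roots_finite[OF Ynz] .
  have finN: "finite N" unfolding N_def by (rule rev_finite_subset[OF finR]) auto
  have "size (proots Y) = (\<Sum>x\<in>set_mset (proots Y). count (proots Y) x)"
    by (simp add: size_multiset_overloaded_eq)
  also have "\<dots> = (\<Sum>x\<in>{x. poly Y x = 0}. order x Y)" using Ynz by simp
  finally have sz: "(\<Sum>x\<in>{x. poly Y x = 0}. order x Y) \<le> degree Y" using size_proots_le by metis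
  have "(\<Sum>x\<in>insert 0 N. order x Y) \<le> (\<Sum>x\<in>{x. poly Y x = 0}. order x Y)"
    by (rule sum_mono2[OF finR]) (auto simp: N_def W)
  moreover have "(\<Sum>x\<in>insert 0 N. order x Y) = order 0 Y + (\<Sum>x\<in>N. order x Y)"
    using finN by (simp add: N_def)
  ultimately have sumN: "(\<Sum>x\<in>N. order x Y) \<le> l - 1" using sz ordY degY by simp
  have ord1: "1 \<le> order x Y" if xN: "x \<in> N" for x
  proof -
    have "poly Y x = 0" using xN by (simp add: N_def)
    then have "order x Y \<noteq> 0" using Ynz order_root by blast
    then show ?thesis by simp
  qed
  have "card N = (\<Sum>x\<in>N. 1)" by simp
  also have "\<dots> \<le> (\<Sum>x\<in>N. order x Y)" by (rule sum_mono) (rule ord1)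
  finally have cN: "card N \<le> (\<Sum>x\<in>N. order x Y)" .
  have cardN: "card N = l - 1" using cN sumN I(4) by (simp add: N_def)
  have simple: "\<forall>x. x < 0 \<and> poly Y x = 0 \<longrightarrow> order x Y = 1"
  proof (intro allI impI)
    fix x assume x: "x < 0 \<and> poly Y x = 0"
    then have xN: "x \<in> N" by (simp add: N_def)
    show "order x Y = 1"
    proof (rule ccontr)
      assume "order x Y \<noteq> 1"
      then have o2: "2 \<le> order x Y" using ord1[OF xN] by simp
      have "(\<Sum>x\<in>N. order x Y) = order x Y + (\<Sum>y\<in>N - {x}. order y Y)"
        using finN xN by (simp add: sum.remove)
      moreover have "card (N - {x}) \<le> (\<Sum>y\<in>N - {x}. order y Y)"
        using sum_mono[of "N - {x}" "\<lambda>_. 1::nat" "\<lambda>y. order y Y"] ord1 by simp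
      moreover have "card (N - {x}) = card N - 1" using finN xN by simp
      moreover have "card N \<ge> 1" using finN xN card_0_eq by fastforce
      ultimately show False using o2 sumN cardN by linarith
    qed
  qed
  show ?thesis
    by (intro exI[of _ Y] conjI UY degY ordY simple) (simp add: cardN[unfolded N_def])
qed


end
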